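(* Let $\mathcal{C}\subseteq\mathbb{F}^n$ be an $\mathbb{F}$-linear code and $\mathcal{L}=(\mathcal{L}_1,\dots,\mathcal{L}_\ell)\in\mathcal{P}(\mathbf{K}^{\mathbf{n}})$. Then for $\mathbf{c}\in\mathcal{C}^\perp$, we have $\mathbf{c}\in\mathcal{C}(\mathcal{L})$ if and only if $\mathbf{c}\cdot\mathbf{y}=0$ for all $\mathbf{y}=(\mathbf{y}^{(1)},\dots,\mathbf{y}^{(\ell)})$ with $\mathbf{y}^{(i)}\in\mathcal{L}_i$ for all $i$ (viewed as a vector in $\mathbb{F}^n$). Furthermore, $\mathcal{C}(\mathcal{L})$ is an $\mathbb{F}$-linear subspace of $\mathcal{C}^\perp$.
   Context: Setting: $\ell,n_1,\dots,n_\ell$ positive integers, $K_1,\dots,K_\ell$ finite fields with a common finite extension $\mathbb{F}$, $m_i=[\mathbb{F}:K_i]$, $n=\sum n_i$. $\mathcal{P}(\mathbf{K}^{\mathbf{n}})=\mathcal{P}(K_1^{n_1})\times\cdots\times\mathcal{P}(K_\ell^{n_\ell})$, where $\mathcal{P}(K_i^{n_i})$ is the lattice of $K_i$-subspaces of $K_i^{n_i}$; inclusion and orthogonal complements (w.r.t. the standard bilinear form on $K_i^{n_i}$) are componentwise. For $\mathbf{c}=(\mathbf{c}^{(1)},\dots,\mathbf{c}^{(\ell)})\in\mathbb{F}^n$ with $\mathbf{c}^{(i)}\in\mathbb{F}^{n_i}$, fix an ordered basis of $\mathbb{F}/K_i$ and let $\Gamma_i(\mathbf{c}^{(i)})$ be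 the $m_i\times n_i$ matrix over $K_i$ whose $j$-th column is the coordinate vector of the $j$-th entry of $\mathbf{c}^{(i)}$; the sum-rank support of $\mathbf{c}$ is $\mathrm{supp}(\mathbf{c})=(E_1,\dots,E_\ell)\in\mathcal{P}(\mathbf{K}^{\mathbf{n}})$ with $E_i$ the $K_i$-row space of $\Gamma_i(\mathbf{c}^{(i)})$. $\mathcal{C}^\perp$ is the orthogonal complement of $\mathcal{C}$ in $\mathbb{F}^n$ w.r.t. the standard bilinear form, and $\mathcal{C}(\mathcal{L})=\{\mathbf{c}\in\mathcal{C}^\perp:\mathrm{supp}(\mathbf{c})\subseteq\mathcal{L}^\perp\}$. *)

theory Defs
  imports Main
begin

text \<open>The common extension field F is the type 'f (a finite field); each K_i is a subfield
 of F, given as a set. Indices are 0-based: blocks i < l, positions j < n i.\<close>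

definition subfield :: "'f::field set \<Rightarrow> bool" where
  "subfield K \<longleftrightarrow> 0 \<in> K \<and> 1 \<in> K \<and> (\<forall>x\<in>K. \<forall>y\<in>K. x + y \<in> K \<and> x * y \<in> K)
     \<and> (\<forall>x\<in>K. - x \<in> K) \<and> (\<forall>x\<in>K. x \<noteq> 0 \<longrightarrow> inverse x \<in> K)"

definition Kvecs :: "'f::field set \<Rightarrow> nat \<Rightarrow> (nat \<Rightarrow> 'f) set" where
  "Kvecs K k = {v. (\<forall>j<k. v j \<in> K) \<and> (\<forall>j\<ge>k. v j = 0)}"

definition Kdot :: "nat \<Rightarrow> (nat \<Rightarrow> 'f::field) \<Rightarrow> (nat \<Rightarrow> 'f) \<Rightarrow> 'f" where
  "Kdot k v w = (\<Sum>j<k. v j * w j)"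

definition Ksubspace :: "'f::field set \<Rightarrow> nat \<Rightarrow> (nat \<Rightarrow> 'f) set \<Rightarrow> bool" where
  "Ksubspace K k V \<longleftrightarrow> V \<subseteq> Kvecs K k \<and> (\<lambda>_. 0) \<in> V
     \<and> (\<forall>v\<in>V. \<forall>w\<in>V. (\<lambda>j. v j + w j) \<in> V)
     \<and> (\<forall>a\<in>K. \<forall>v\<in>V. (\<lambda>j. a * v j) \<in> V)"

definition Korth :: "'f::field set \<Rightarrow> nat \<Rightarrow> (nat \<Rightarrow> 'f) set \<Rightarrow> (nat \<Rightarrow> 'f) set" where
  "Korth K k V = {v \<in> Kvecs K k. \<forall>w\<in>V. Kdot k v w = 0}"

definition is_basis :: "'f::field set \<Rightarrow> nat \<Rightarrow> (nat \<Rightarrow> 'f) \<Rightarrow> bool" where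
  "is_basis K m b \<longleftrightarrow> (\<forall>x::'f. \<exists>!a. (\<forall>k<m. a k \<in> K) \<and> (\<forall>k\<ge>m. a k = 0)
      \<and> x = (\<Sum>k<m. a k * b k))"

definition coord :: "'f::field set \<Rightarrow> nat \<Rightarrow> (nat \<Rightarrow> 'f) \<Rightarrow> 'f \<Rightarrow> nat \<Rightarrow> 'f" where
  "coord K m b x = (THE a. (\<forall>k<m. a k \<in> K) \<and> (\<forall>k\<ge>m. a k = 0) \<and> x = (\<Sum>k<m. a k * b k))"

text \<open>Row k of the m x k' matrix Gamma(v) whose j-th column is the coordinate vector of v j.\<close>
definition Gamma_row :: "'f::field set \<Rightarrow> nat \<Rightarrow> (nat \<Rightarrow> 'f) \<Rightarrow> nat \<Rightarrow> (nat \<Rightarrow> 'f) \<Rightarrow> nat \<Rightarrow> (nat \<Rightarrow> 'f)" where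
  "Gamma_row K m b k' v k = (\<lambda>j. if j < k' then coord K m b (v j) k else 0)"

definition row_space :: "'f::field set \<Rightarrow> nat \<Rightarrow> (nat \<Rightarrow> 'f) \<Rightarrow> nat \<Rightarrow> (nat \<Rightarrow> 'f) \<Rightarrow> (nat \<Rightarrow> 'f) set" where
  "row_space K m b k' v = {(\<lambda>j. \<Sum>k<m. a k * Gamma_row K m b k' v k j) | a. \<forall>k<m. a k \<in> K}"

text \<open>Vectors of F^n = F^{n_0} x ... x F^{n_{l-1}} in block form: c i j is the j-th entry of c^(i).\<close>
definition Fvecs :: "nat \<Rightarrow> (nat \<Rightarrow> nat) \<Rightarrow> (nat \<Rightarrow> nat \<Rightarrow> 'f::field) set" where
  "Fvecs l n = {c. \<forall>i j. (l \<le> i \<or> n i \<le> j) \<longrightarrow> c i j = 0}"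

definition Fdot :: "nat \<Rightarrow> (nat \<Rightarrow> nat) \<Rightarrow> (nat \<Rightarrow> nat \<Rightarrow> 'f::field) \<Rightarrow> (nat \<Rightarrow> nat \<Rightarrow> 'f) \<Rightarrow> 'f" where
  "Fdot l n c y = (\<Sum>i<l. \<Sum>j<n i. c i j * y i j)"

definition Fsubspace :: "nat \<Rightarrow> (nat \<Rightarrow> nat) \<Rightarrow> (nat \<Rightarrow> nat \<Rightarrow> 'f::field) set \<Rightarrow> bool" where
  "Fsubspace l n V \<longleftrightarrow> V \<subseteq> Fvecs l n \<and> (\<lambda>_ _. 0) \<in> V
     \<and> (\<forall>v\<in>V. \<forall>w\<in>V. (\<lambda>i j. v i j + w i j) \<in> V)
     \<and> (\<forall>a. \<forall>v\<in>V. (\<lambda>i j. a * v i j) \<in> V)"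

definition dual_code :: "nat \<Rightarrow> (nat \<Rightarrow> nat) \<Rightarrow> (nat \<Rightarrow> nat \<Rightarrow> 'f::field) set \<Rightarrow> (nat \<Rightarrow> nat \<Rightarrow> 'f) set" where
  "dual_code l n C = {c \<in> Fvecs l n. \<forall>x\<in>C. Fdot l n c x = 0}"

definition supp :: "nat \<Rightarrow> (nat \<Rightarrow> nat) \<Rightarrow> (nat \<Rightarrow> 'f::field set) \<Rightarrow> (nat \<Rightarrow> nat) \<Rightarrow> (nat \<Rightarrow> nat \<Rightarrow> 'f)
    \<Rightarrow> (nat \<Rightarrow> nat \<Rightarrow> 'f) \<Rightarrow> nat \<Rightarrow> (nat \<Rightarrow> 'f) set" where
  "supp l n K m b c = (\<lambda>i. row_space (K i) (m i) (b i) (n i) (c i))"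

definition code_L :: "nat \<Rightarrow> (nat \<Rightarrow> nat) \<Rightarrow> (nat \<Rightarrow> 'f::field set) \<Rightarrow> (nat \<Rightarrow> nat) \<Rightarrow> (nat \<Rightarrow> nat \<Rightarrow> 'f)
    \<Rightarrow> (nat \<Rightarrow> nat \<Rightarrow> 'f) set \<Rightarrow> (nat \<Rightarrow> (nat \<Rightarrow> 'f) set) \<Rightarrow> (nat \<Rightarrow> nat \<Rightarrow> 'f) set" where
  "code_L l n K m b C L = {c \<in> dual_code l n C.
      \<forall>i<l. supp l n K m b c i \<subseteq> Korth (K i) (n i) (L i)}"

end

theory Submission
  imports Defs
begin

lemma coord_prop:
  assumes "is_basis K m b"
  shows "(\<forall>k<m. coord K m b x k \<in> K) \<and> (\<forall>k\<ge>m. coord K m b x k = 0)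
         \<and> x = (\<Sum>k<m. coord K m b x k * b k)"
proof -
  from assms have "\<exists>!a. (\<forall>k<m. a k \<in> K) \<and> (\<forall>k\<ge>m. a k = 0) \<and> x = (\<Sum>k<m. a k * b k)"
    unfolding is_basis_def by blast
  then show ?thesis unfolding coord_def by (rule theI')
qed

lemma basis_indep:
  assumes "is_basis K m b" "subfield K" "\<forall>k<m. t k \<in> K" "(\<Sum>k<m. t k * b k) = 0" "r < m"
  shows "t r = 0"
proof -
  from assms(1) have U: "\<exists>!a. (\<forall>k<m. a k \<in> K) \<and> (\<forall>k\<ge>m. a k = 0) \<and> (0::'a) = (\<Sum>k<m. a k * b k)"
    unfolding is_basis_def by blast
  define a1 where "a1 = (\<lambda>k. if k < m then t k else 0)"
  have "(\<Sum>k<m. a1 k * b k) = (\<Sum>k<m. t k * b k)" unfolding a1_def by (rule sum.cong) auto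
  hence P1: "(\<forall>k<m. a1 k \<in> K) \<and> (\<forall>k\<ge>m. a1 k = 0) \<and> (0::'a) = (\<Sum>k<m. a1 k * b k)"
    using assms(3,4) unfolding a1_def by auto
  have P2: "(\<forall>k<m. (\<lambda>_. 0) k \<in> K) \<and> (\<forall>k\<ge>m. (\<lambda>_. (0::'a)) k = 0) \<and> (0::'a) = (\<Sum>k<m. (\<lambda>_. 0) k * b k)"
    using assms(2) unfolding subfield_def by auto
  from U obtain a0 where a0: "\<And>y. (\<forall>k<m. y k \<in> K) \<and> (\<forall>k\<ge>m. y k = 0) \<and> (0::'a) = (\<Sum>k<m. y k * b k) \<Longrightarrow> y = a0"
    by (elim ex1E) blast
  have "a1 = a0" using a0[OF P1] .
  moreover have "(\<lambda>_. 0) = a0" using a0[OF P2] .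
  ultimately have "a1 = (\<lambda>_. 0)" by simp
  then show ?thesis using assms(5) unfolding a1_def by (metis)
qed

lemma subfield_sum:
  assumes "subfield K" "finite A" "\<forall>j\<in>A. f j \<in> K"
  shows "sum f A \<in> K"
  using assms(2,3)
proof (induction A rule: finite_induct)
  case empty then show ?case using assms(1) unfolding subfield_def by simp
next
  case (insert x F) then show ?case using assms(1) unfolding subfield_def by simp
qed

lemma block_char:
  assumes sf: "subfield K" and bas: "is_basis K m b" and ks: "Ksubspace K k L"
  shows "row_space K m b k v \<subseteq> Korth K k L \<longleftrightarrow> (\<forall>w\<in>L. (\<Sum>j<k. v j * w j) = 0)"
proof -
  let ?G = "Gamma_row K m b k v"
  have Lk: "\<And>w j. w \<in> L \<Longrightarrow> j < k \<Longrightarrow> w j \<in> K"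
    using ks unfolding Ksubspace_def Kvecs_def by blast
  have cK: "coord K m b x r \<in> K" if "r < m" for x r using coord_prop[OF bas, of x] that by simp
  have ident: "(\<Sum>j<k. v j * w j) = (\<Sum>r<m. Kdot k (?G r) w * b r)" for w
  proof -
    have "(\<Sum>j<k. v j * w j) = (\<Sum>j<k. (\<Sum>r<m. coord K m b (v j) r * b r) * w j)"
    proof (rule sum.cong[OF refl])
      fix j
      have vj: "v j = (\<Sum>r<m. coord K m b (v j) r * b r)"
        using conjunct2[OF conjunct2[OF coord_prop[OF bas, of "v j"]]] .
      show "v j * w j = (\<Sum>r<m. coord K m b (v j) r * b r) * w j"
        by (rule arg_cong[where f="\<lambda>z. z * w j"], rule vj)
    qed
    also have "\<dots> = (\<Sum>j<k. \<Sum>r<m. coord K m b (v j) r * w j * b r)"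
      by (simp add: sum_distrib_right sum_distrib_left mult_ac)
    also have "\<dots> = (\<Sum>r<m. \<Sum>j<k. coord K m b (v j) r * w j * b r)"
      by (rule sum.swap)
    also have "\<dots> = (\<Sum>r<m. Kdot k (?G r) w * b r)"
      unfolding Kdot_def Gamma_row_def by (simp add: sum_distrib_right)
    finally show ?thesis .
  qed
  have GK: "Kdot k (?G r) w \<in> K" if "w \<in> L" "r < m" for w r
    unfolding Kdot_def Gamma_row_def
    apply (rule subfield_sum[OF sf]) using sf Lk[OF that(1)] cK[OF that(2)] unfolding subfield_def by auto
  have lin: "Kdot k (\<lambda>j. \<Sum>r<m. a r * ?G r j) w = (\<Sum>r<m. a r * Kdot k (?G r) w)" for a w
  proof -
    have "Kdot k (\<lambda>j. \<Sum>r<m. a r * ?G r j) w = (\<Sum>j<k. \<Sum>r<m. a r * (?G r j * w j))"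
      unfolding Kdot_def by (simp add: sum_distrib_right mult.assoc)
    also have "\<dots> = (\<Sum>r<m. \<Sum>j<k. a r * (?G r j * w j))" by (rule sum.swap)
    also have "\<dots> = (\<Sum>r<m. a r * Kdot k (?G r) w)"
      unfolding Kdot_def by (simp add: sum_distrib_left)
    finally show ?thesis .
  qed
  show ?thesis
  proof
    assume H: "row_space K m b k v \<subseteq> Korth K k L"
    show "\<forall>w\<in>L. (\<Sum>j<k. v j * w j) = 0"
    proof
      fix w assume w: "w \<in> L"
      have "Kdot k (?G r) w = 0" if r: "r < m" for r
      proof -
        define a where "a = (\<lambda>r'. if r' = r then (1::'a) else 0)"
        have e: "a r' * x = (if r' = r then x else 0)" for r' x unfolding a_def by simp
        have "(\<lambda>j. \<Sum>r'<m. a r' * ?G r' j) = ?G r" using r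
          by (intro ext) (simp add: e sum.delta)
        moreover have "\<forall>r'<m. a r' \<in> K" using sf unfolding a_def subfield_def by auto
        ultimately have "?G r \<in> row_space K m b k v" unfolding row_space_def
          by (intro CollectI exI[of _ a]) simp
        with H w show ?thesis unfolding Korth_def by blast
      qed
      then show "(\<Sum>j<k. v j * w j) = 0" unfolding ident by simp
    qed
  next
    assume H: "\<forall>w\<in>L. (\<Sum>j<k. v j * w j) = 0"
    have Z: "Kdot k (?G r) w = 0" if "w \<in> L" "r < m" for w r
    proof -
      have "(\<Sum>r<m. Kdot k (?G r) w * b r) = 0" using H that(1) ident by metis
      then show ?thesis using basis_indep[OF bas sf, of "\<lambda>r. Kdot k (?G r) w"] GK that by blast
    qed
    show "row_space K m b k v \<subseteq> Korth K k L"
    proof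
      fix x assume "x \<in> row_space K m b k v"
      then obtain a where x: "x = (\<lambda>j. \<Sum>r<m. a r * ?G r j)" and a: "\<forall>r<m. a r \<in> K"
        unfolding row_space_def by blast
      have "x \<in> Kvecs K k"
        unfolding Kvecs_def x
      proof (intro CollectI conjI allI impI)
        fix j assume "j < k"
        show "(\<Sum>r<m. a r * ?G r j) \<in> K"
          apply (rule subfield_sum[OF sf]) using sf a cK unfolding subfield_def Gamma_row_def by auto
      next
        fix j assume "k \<le> j"
        then show "(\<Sum>r<m. a r * ?G r j) = 0" unfolding Gamma_row_def by simp
      qed
      moreover have "\<forall>w\<in>L. Kdot k x w = 0"
        using Z unfolding x lin by simp
      ultimately show "x \<in> Korth K k L" unfolding Korth_def by blast
    qed
  qed
qed

theorem mainTheorem3: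
  fixes l :: nat and n :: "nat \<Rightarrow> nat" and K :: "nat \<Rightarrow> 'f::{field,finite} set"
    and m :: "nat \<Rightarrow> nat" and b :: "nat \<Rightarrow> nat \<Rightarrow> 'f"
    and C :: "(nat \<Rightarrow> nat \<Rightarrow> 'f) set" and L :: "nat \<Rightarrow> (nat \<Rightarrow> 'f) set"
  assumes "l > 0" and "\<forall>i<l. n i > 0"
    and "\<forall>i<l. subfield (K i)"
    and "\<forall>i<l. is_basis (K i) (m i) (b i)"
    and "Fsubspace l n C"
    and "\<forall>i<l. Ksubspace (K i) (n i) (L i)"
  shows "(\<forall>c \<in> dual_code l n C. c \<in> code_L l n K m b C L \<longleftrightarrow>
            (\<forall>y. (\<forall>i<l. y i \<in> L i) \<longrightarrow> Fdot l n c y = 0))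
         \<and> Fsubspace l n (code_L l n K m b C L)
         \<and> code_L l n K m b C L \<subseteq> dual_code l n C"
proof -
  define Q where "Q c = (\<forall>i<l. \<forall>w\<in>L i. (\<Sum>j<n i. c i j * w j) = 0)" for c :: "nat \<Rightarrow> nat \<Rightarrow> 'f"
  have CL: "code_L l n K m b C L = {c \<in> dual_code l n C. Q c}"
    unfolding code_L_def Q_def supp_def using block_char assms(3,4,6) by blast
  have eq: "Q c \<longleftrightarrow> (\<forall>y. (\<forall>i<l. y i \<in> L i) \<longrightarrow> Fdot l n c y = 0)" for c
  proof
    assume "Q c" then show "\<forall>y. (\<forall>i<l. y i \<in> L i) \<longrightarrow> Fdot l n c y = 0"
      unfolding Q_def Fdot_def by simp
  next
    assume H: "\<forall>y. (\<forall>i<l. y i \<in> L i) \<longrightarrow> Fdot l n c y = 0"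
    show "Q c" unfolding Q_def
    proof (intro allI impI ballI)
      fix i w assume i: "i < l" and w: "w \<in> L i"
      define y where "y = (\<lambda>i'. if i' = i then w else (\<lambda>_. 0))"
      have "\<forall>i'<l. y i' \<in> L i'" using w assms(6) unfolding y_def Ksubspace_def by auto
      with H have "Fdot l n c y = 0" by blast
      moreover have "Fdot l n c y = (\<Sum>i'<l. if i' = i then (\<Sum>j<n i. c i j * w j) else 0)"
        unfolding Fdot_def y_def by (rule sum.cong) auto
      moreover have "\<dots> = (\<Sum>j<n i. c i j * w j)" using i by simp
      ultimately show "(\<Sum>j<n i. c i j * w j) = 0" by simp
    qed
  qed
  have C: "C \<subseteq> Fvecs l n" using assms(5) unfolding Fsubspace_def by blast
  have sub: "Fsubspace l n (code_L l n K m b C L)"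
    unfolding Fsubspace_def CL
  proof (intro conjI ballI allI)
    show "{c \<in> dual_code l n C. Q c} \<subseteq> Fvecs l n" unfolding dual_code_def by blast
    show "(\<lambda>_ _. 0) \<in> {c \<in> dual_code l n C. Q c}"
      unfolding dual_code_def Q_def Fvecs_def Fdot_def by simp
  next
    fix v w assume v: "v \<in> {c \<in> dual_code l n C. Q c}" and w: "w \<in> {c \<in> dual_code l n C. Q c}"
    show "(\<lambda>i j. v i j + w i j) \<in> {c \<in> dual_code l n C. Q c}"
      using v w unfolding dual_code_def Q_def Fvecs_def Fdot_def
      by (simp add: distrib_right sum.distrib)
  next
    fix a v assume v: "v \<in> {c \<in> dual_code l n C. Q c}"
    show "(\<lambda>i j. a * v i j) \<in> {c \<in> dual_code l n C. Q c}"
      using v unfolding dual_code_def Q_def Fvecs_def Fdot_def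
      by (simp add: mult.assoc flip: sum_distrib_left)
  qed
  show ?thesis using CL eq sub by auto
qed

end
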